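(* Let $p>3$ be prime, $t\in\{1,3,p,3p\}$, and $1\le r\le 3p-1$ with $\gcd(r,3p)=1$. Then \[\mathcal{S}(3,r,t)=\begin{cases}3(|r|_p-1) & \text{if } r\equiv1\pmod3\text{ and } t\in\{3,3p\},\\ 3(|r|_p-1) & \text{if } r\equiv 1\pmod 3,\ t\in\{1,p\}\text{ and } 3\nmid|r|_p,\\ |r|_p-3 & \text{if } r\equiv 1\pmod 3,\ t\in\{1,p\}\text{ and } 3\mid |r|_p,\\ 3(|r|_p-1) & \text{if } r\equiv 2\pmod 3\text{ and } |r|_p\text{ is odd},\\ 3\left(\frac{|r|_p}{2}-1\right) & \text{if } r\equiv 2\pmod 3\text{ and }|r|_p\text{ is even}.\end{cases}\]
   Context: $|r|_m$ is the multiplicative order of $r$ modulo $m$ (with $|r|_1=1$). $S_k(x):=1+x+\cdots+x^{k-1}$, $S_0:=0$. For $m\ge1$ with $\gcd(r,m)=1$, $\kappa(m,r,t):=\dfrac{m|r|_m}{\gcd(m,\,tS_{|r|_m}(r))}$. For $d\in\{1,3,p,3p\}$, $\Lambda(d,r,t):=\{\ell>0:\ \ell \text{ divides } \frac{|r|_{3p}}{\gcd(\kappa(d,r,t),|r|_{3p})}\text{ and }\gcd(r^{\ell\kappa(d,r,t)}-1,3p)=d\}$, and $\mathcal{S}(d,r,t):=\sum_{\ell\in\Lambda(d,r,t)} d\,\phi\!\left(\frac{|r|_{3p}}{\ell\gcd(\kappa(d,r,t),|r|_{3p})}\right)$, with $\phi$ Euler's function. *)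

theory Defs
  imports "HOL-Number_Theory.Number_Theory"
begin

definition Ssum :: "nat \<Rightarrow> nat \<Rightarrow> nat" where
  "Ssum k x = (\<Sum>i<k. x ^ i)"

definition kappa :: "nat \<Rightarrow> nat \<Rightarrow> nat \<Rightarrow> nat" where
  "kappa m r t = (m * ord m r) div gcd m (t * Ssum (ord m r) r)"

definition Lam :: "nat \<Rightarrow> nat \<Rightarrow> nat \<Rightarrow> nat \<Rightarrow> nat set" where
  "Lam p d r t = {l. l > 0 \<and>
      l dvd (ord (3*p) r div gcd (kappa d r t) (ord (3*p) r)) \<and>
      gcd (r ^ (l * kappa d r t) - 1) (3*p) = d}"

definition calS :: "nat \<Rightarrow> nat \<Rightarrow> nat \<Rightarrow> nat \<Rightarrow> nat" where
  "calS p d r t = (\<Sum>l\<in>Lam p d r t.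
      d * totient (ord (3*p) r div (l * gcd (kappa d r t) (ord (3*p) r))))"

end

theory Submission imports Defs begin

lemma sum_proper:
  assumes "N > (0::nat)"
  shows "(\<Sum>l\<in>{l. 0<l \<and> l dvd N \<and> l \<noteq> N}. totient (N div l)) = N - 1"
proof -
  have fin: "finite {l. l dvd N}" using assms by simp
  have "(\<Sum>l\<in>{l. l dvd N}. totient (N div l)) = (\<Sum>d | d dvd N. totient d)"
    by (rule sum.reindex_bij_witness[where i="\<lambda>d. N div d" and j="\<lambda>d. N div d"])
       (auto simp: assms dvd_div_eq_mult div_div_eq_right intro: dvd_div_mult_self)
  also have "\<dots> = N" by (rule totient_divisor_sum)
  finally have *: "(\<Sum>l\<in>{l. l dvd N}. totient (N div l)) = N" .
  have eq: "{l. l dvd N} = insert N {l. 0<l \<and> l dvd N \<and> l \<noteq> N}"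
    using assms by auto
  have "(\<Sum>l\<in>{l. l dvd N}. totient (N div l)) = totient 1 + (\<Sum>l\<in>{l. 0<l \<and> l dvd N \<and> l \<noteq> N}. totient (N div l))"
    unfolding eq using fin assms by (subst sum.insert) auto
  then show ?thesis using * by simp
qed

lemma gcd_cond:
  fixes p a :: nat
  assumes "prime p" "p > 3"
  shows "gcd a (3*p) = 3 \<longleftrightarrow> 3 dvd a \<and> \<not> p dvd a"
proof -
  have e: "{2..<3::nat} = {2}" by auto
  have p3: "prime (3::nat)" unfolding prime_nat_iff' e by simp
  have cp: "coprime 3 p" using assms p3 by (intro primes_coprime) auto
  have np3: "\<not> p dvd 3" using assms(2) by (auto dest: dvd_imp_le)
  show ?thesis
  proof (cases "3 dvd a")
    case True
    show ?thesis
    proof (cases "p dvd a")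
      case True
      with \<open>3 dvd a\<close> cp have "3*p dvd a" by (intro divides_mult) auto
      then have "gcd a (3*p) = 3*p" by (simp add: gcd_nat.absorb2)
      then show ?thesis using True assms(2) by auto
    next
      case False
      then have "coprime a p" using assms(1) by (metis prime_imp_coprime coprime_commute)
      then have "gcd a (3*p) = gcd a 3" by (rule gcd_mult_right_right_cancel)
      also have "\<dots> = 3" using \<open>3 dvd a\<close> by (simp add: gcd_nat.absorb2)
      finally show ?thesis using False True by auto
    qed
  next
    case False
    then have "coprime a 3" using p3 by (metis prime_imp_coprime coprime_commute)
    then have "gcd a (3*p) = gcd a p" by (rule gcd_mult_right_left_cancel)
    moreover have "gcd a p dvd p" by simp
    ultimately have "gcd a (3*p) = 1 \<or> gcd a (3*p) = p" using assms(1) by (auto simp: prime_nat_iff)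
    then show ?thesis using False assms(2) by auto
  qed
qed

lemma sum_proper3:
  assumes "N > (0::nat)"
  shows "(\<Sum>l\<in>{l. 0<l \<and> l dvd N \<and> l \<noteq> N}. 3 * totient (N div l)) = 3 * (N - 1)"
  using sum_proper[OF assms] by (simp add: sum_distrib_left[symmetric])

theorem lemma5p9:
  fixes p r t :: nat
  assumes "prime p" and "p > 3"
    and "t \<in> {1, 3, p, 3*p}"
    and "1 \<le> r" and "r \<le> 3*p - 1" and "coprime r (3*p)"
  shows "int (calS p 3 r t) =
    (if r mod 3 = 1 \<and> t \<in> {3, 3*p} then 3 * (int (ord p r) - 1)
     else if r mod 3 = 1 \<and> t \<in> {1, p} \<and> \<not> 3 dvd ord p r then 3 * (int (ord p r) - 1)
     else if r mod 3 = 1 \<and> t \<in> {1, p} \<and> 3 dvd ord p r then int (ord p r) - 3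
     else if r mod 3 = 2 \<and> odd (ord p r) then 3 * (int (ord p r) - 1)
     else 3 * (int (ord p r) div 2 - 1))"
proof -
  define q where "q = ord p r"
  have e: "{2..<3::nat} = {2}" by auto
  have p3: "prime (3::nat)" unfolding prime_nat_iff' e by simp
  have cp: "coprime 3 p" using assms p3 by (intro primes_coprime) auto
  have cr3: "coprime 3 r" and crp: "coprime p r"
    using assms(6) by (auto simp: coprime_commute)
  have q0: "q > 0" using crp by (simp add: q_def)
  have Oeq: "ord (3*p) r = lcm (ord 3 r) q" by (simp add: ord_modulus_mult_coprime cp q_def)
  have r3: "r mod 3 = 1 \<or> r mod 3 = 2"
  proof -
    have "r mod 3 \<noteq> 0" using cr3 p3
      by (metis dvd_eq_mod_eq_0 coprime_absorb_left coprime_commute coprime_self nat_dvd_1_iff_1 numeral_eq_one_iff semiring_norm(86) dvd_refl coprime_common_divisor)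
    then show ?thesis by presburger
  qed
  have dv: "n dvd r ^ x - 1 \<longleftrightarrow> ord n r dvd x" for n x
  proof -
    have "r ^ x \<ge> 1" using assms(4) by simp
    then show ?thesis by (simp add: cong_altdef_nat[symmetric] ord_divides')
  qed
  have cond: "gcd (r ^ x - 1) (3*p) = 3 \<longleftrightarrow> ord 3 r dvd x \<and> \<not> q dvd x" for x
    using gcd_cond[OF assms(1,2)] dv by (simp add: q_def)
  define k where "k = kappa 3 r t"
  define Ob where "Ob = ord (3*p) r"
  define g where "g = gcd k Ob"
  define N where "N = Ob div g"
  have LamG: "Lam p 3 r t = {l. 0 < l \<and> l dvd N \<and> ord 3 r dvd l*k \<and> \<not> q dvd l*k}"
    unfolding Lam_def cond k_def Ob_def g_def N_def by simp
  have calSG: "calS p 3 r t = (\<Sum>l\<in>Lam p 3 r t. 3 * totient (N div l))"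
  proof -
    have dd: "a div (l*b) = a div b div l" for a l b :: nat by (metis div_mult2_eq mult.commute)
    show ?thesis unfolding calS_def dd N_def g_def k_def Ob_def by simp
  qed
  have fin: "\<And>M. M > 0 \<Longrightarrow> Lam p 3 r t = {l. 0<l \<and> l dvd M \<and> l \<noteq> M} \<Longrightarrow> N = M \<Longrightarrow>
      calS p 3 r t = 3 * (M - 1)"
    using calSG sum_proper3 by simp
  have pn3: "p \<noteq> 3" "p \<noteq> 1" "3*p \<noteq> 3" "3*p \<noteq> 1" "p \<noteq> 3*p" using assms(2) by auto
  have dvN: "l dvd M \<Longrightarrow> (\<not> M dvd l) = (l \<noteq> M)" for l M :: nat
    by (auto intro: dvd_antisym)
  show ?thesis
  proof (cases "r mod 3 = 1")
    case r1: True
    have o3: "ord 3 r = 1" using r1 by (simp add: ord_eq_Suc_0_iff cong_def)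
    have OO: "Ob = q" using Oeq o3 by (simp add: Ob_def)
    have kk: "k = 3 div gcd 3 t" by (simp add: k_def kappa_def o3 Ssum_def)
    show ?thesis
    proof (cases "t \<in> {3, 3*p}")
      case True
      have "k = 1" using True kk by auto
      then have NN: "N = q" by (simp add: N_def g_def OO)
      have "Lam p 3 r t = {l. 0<l \<and> l dvd q \<and> l \<noteq> q}"
        unfolding LamG NN o3 \<open>k = 1\<close> using dvN[of _ q] by simp blast
      from fin[OF q0 this NN] q0 have c: "int (calS p 3 r t) = 3 * (int q - 1)"
        by (simp add: of_nat_diff)
      show ?thesis using c True r1 by (simp add: q_def)
    next
      case False
      then have t1p: "t \<in> {1, p}" using assms(3) by auto
      have "coprime 3 t" using t1p cp by auto
      then have "gcd 3 t = 1" by (rule coprime_imp_gcd_eq_1)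
      then have "k = 3" using kk by simp
      show ?thesis
      proof (cases "3 dvd q")
        case n3: False
        have cq: "coprime q 3" using n3 p3 by (metis prime_imp_coprime coprime_commute)
        have "gcd 3 q = 1" using cq by (metis coprime_commute coprime_imp_gcd_eq_1)
        then have NN: "N = q" by (simp add: N_def g_def OO \<open>k = 3\<close>)
        have "Lam p 3 r t = {l. 0<l \<and> l dvd q \<and> l \<noteq> q}"
          unfolding LamG NN o3 \<open>k = 3\<close> using coprime_dvd_mult_left_iff[OF cq] dvN[of _ q]
          by simp blast
        from fin[OF q0 this NN] q0 have c: "int (calS p 3 r t) = 3 * (int q - 1)"
          by (simp add: of_nat_diff)
        show ?thesis using c False t1p n3 r1 by (simp add: q_def)
      next
        case y3: True
        then obtain M where qM: "q = 3 * M" by blast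
        have M0: "M > 0" using q0 qM by simp
        have "gcd 3 q = 3" using y3 by (simp add: gcd_nat.absorb1)
        then have NN: "N = M" by (simp add: N_def g_def OO \<open>k = 3\<close> qM)
        have cc: "(3*M dvd l*3) = (M dvd l)" for l :: nat by (simp add: mult.commute[of l])
        have "Lam p 3 r t = {l. 0<l \<and> l dvd M \<and> l \<noteq> M}"
          unfolding LamG NN o3 \<open>k = 3\<close> qM cc using dvN[of _ M] by simp blast
        from fin[OF M0 this NN] M0 have c: "int (calS p 3 r t) = 3 * int M - 3"
          by (simp add: of_nat_diff)
        have "int q = 3 * int M" using qM by simp
        then have c2: "int (calS p 3 r t) = int q - 3" using c by simp
        show ?thesis using c2 False t1p y3 r1 by (simp add: q_def)
      qed
    qed
  next
    case False
    then have r2: "r mod 3 = 2" using r3 by simp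
    have "[r \<noteq> 1] (mod 3)" using r2 by (simp add: cong_def)
    moreover have "[r^2 = 1] (mod 3)" 
    proof -
      have "r^2 mod 3 = (r mod 3)^2 mod 3" by (simp add: power_mod)
      then show ?thesis using r2 by (simp add: cong_def)
    qed
    ultimately have o3: "ord 3 r = 2" by (simp add: ord_eq_2_iff)
    have "3 dvd 1 + r" using r2 by presburger
    then have "3 dvd t * (1 + r)" by (rule dvd_mult)
    then have "gcd 3 (t * (1 + r)) = 3" by (rule gcd_nat.absorb1)
    then have "k = 2" by (simp add: k_def kappa_def o3 Ssum_def numeral_2_eq_2)
    show ?thesis
    proof (cases "odd q")
      case True
      have cq: "coprime q 2" using True by simp
      have OO: "Ob = 2 * q" using Oeq o3 cq by (simp add: Ob_def lcm_coprime coprime_commute)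
      have NN: "N = q" by (simp add: N_def g_def OO \<open>k = 2\<close>)
      have "Lam p 3 r t = {l. 0<l \<and> l dvd q \<and> l \<noteq> q}"
        unfolding LamG NN o3 \<open>k = 2\<close> using coprime_dvd_mult_left_iff[OF cq] dvN[of _ q]
        by simp blast
      from fin[OF q0 this NN] q0 have c: "int (calS p 3 r t) = 3 * (int q - 1)"
        by (simp add: of_nat_diff)
      show ?thesis using c True r2 by (simp add: q_def)
    next
      case ev: False
      then obtain M where qM: "q = 2 * M" by blast
      have M0: "M > 0" using q0 qM by simp
      have OO: "Ob = q" using Oeq o3 qM by (simp add: Ob_def)
      have NN: "N = M" by (simp add: N_def g_def OO \<open>k = 2\<close> qM)
      have cc: "(2*M dvd l*2) = (M dvd l)" for l :: nat by (simp add: mult.commute[of l])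
      have "Lam p 3 r t = {l. 0<l \<and> l dvd M \<and> l \<noteq> M}"
        unfolding LamG NN o3 \<open>k = 2\<close> qM cc using dvN[of _ M] by simp blast
      from fin[OF M0 this NN] M0 have c: "int (calS p 3 r t) = 3 * (int M - 1)"
        by (simp add: of_nat_diff)
      have "int q div 2 = int M" using qM by simp
      then have c2: "int (calS p 3 r t) = 3 * (int q div 2 - 1)" using c by simp
      show ?thesis using c2 ev r2 by (simp add: q_def)
    qed
  qed
qed

end
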